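(* Let $k\ge0$, $n,q\ge1$, $\mathcal{X}\subset\mathbb{R}^n$ open, and let $\Psi\in C^0(\mathcal{X},\mathbb{R}^q)$ if $k=0$, or $\Psi\in C^k_b(\mathcal{X},\mathbb{R}^q)$ if $k\ge1$, be globally Lipschitz continuous with constant $K_\Psi\in[0,\infty)$. Fix $m\ge n+q$, $\tau\in[0,T]$, $w,\tilde w\in(0,\infty)$ and $K\in[0,\infty)$ with $$KT\ \ge\ \frac{K_\Psi}{w\tilde w}.$$ Then there exists an augmented neural DDE $\Phi\in\mathrm{NDDE}^k_\tau(\mathcal{X},\mathbb{R}^q)$ in dimension $m$ with $\Phi(x)=\Psi(x)$ for all $x\in\mathcal{X}$, whose vector field $F:\mathbb{R}\times\Omega_y\to\mathbb{R}^m$ is globally Lipschitz continuous in the second variable on $\mathbb{R}\times\Omega_0$ with constant $K$, where $\Omega_0=\{c_{\lambda(x)}:x\in\mathcal{X}\}\subset\Omega_y$, and whose weight matrices satisfy $\|W\|_\infty=w$, $\|\tilde W\|_\infty=\tilde w$.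
   Context: Throughout, $\|\cdot\|_\infty$ denotes the max-norm on $\mathbb{R}^d$ and, for a matrix $A\in\mathbb{R}^{r\times s}$, the induced norm $\|A\|_\infty=\max_{\|x\|_\infty=1}\|Ax\|_\infty$. Fix $T>0$, a delay $\tau\in[0,T]$ and $m\ge1$, and let $\mathcal{C}=C^0([-\tau,0],\mathbb{R}^m)$ with norm $\|u\|_\infty=\sup_{s\in[-\tau,0]}\|u(s)\|_\infty$. For a function $y$ defined on $[t-\tau,t]$, $y_t\in\mathcal{C}$ is $y_t(s)=y(t+s)$. For $a\in\mathbb{R}^m$, $c_a\in\mathcal{C}$ is the constant function $c_a(s)=a$. Given $F:\Omega\to\mathbb{R}^m$, $\Omega\subset\mathbb{R}\times\mathcal{C}$ open, and $(t_0,u)\in\Omega$, a solution of the DDE $\frac{dy}{dt}=F(t,y_t)$ ($t\ge t_0$), $y_{t_0}=u$, is a continuous $y:[t_0-\tau,t_0+c)\to\mathbb{R}^m$, $c\in(0,\infty]$, with $y_{t_0}=u$, $(t,y_t)\in\Omega$ and $y'(t)=F(t,y_t)$ for $t\in[t_0,t_0+c)$; it is denoted $y(t_0,u)$. $\mathcal{I}_a$ denotes the maximal interval of existence of $y(0,c_a)$. For $k\ge1$, $C^{0,k}_b(\Omega,\mathbb{R}^m)$ denotes the continuous maps $F$ on $\Omega$ that are $k$ times continuously Fréchet differentiable in the second variable with the derivatives of orders $1,\dots,k$ bounded on $\Omega$. Neural DDE: let $n,q\ge1$, $\mathcal{X}\subset\mathbb{R}^n$ open, $\lambda(x)=Wx+b$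 with $W\in\mathbb{R}^{m\times n}$, $b\in\mathbb{R}^m$, $\tilde\lambda(y)=\tilde Wy+\tilde b$ with $\tilde W\in\mathbb{R}^{q\times m}$, $\tilde b\in\mathbb{R}^q$, and $F:\Omega_t\times\Omega_y\to\mathbb{R}^m$ with $\Omega_t\subset\mathbb{R}$, $\Omega_y\subset\mathcal{C}$ open, satisfying the well-definedness conditions: $[0,T]\subset\Omega_t$, $\Omega_0:=\{c_{\lambda(x)}:x\in\mathcal{X}\}\subset\Omega_y$, and $[-\tau,T]\subset\mathcal{I}_{\lambda(x)}$ for all $x\in\mathcal{X}$. The associated neural DDE is $\Phi:\mathcal{X}\to\mathbb{R}^q$, $\Phi(x)=\tilde\lambda(y(0,c_{\lambda(x)})(T))$. For $k\ge1$, $\mathrm{NDDE}^k_\tau(\mathcal{X},\mathbb{R}^q)$ is the set of all such $\Phi$ with $F\in C^{0,k}_b(\Omega_t\times\Omega_y,\mathbb{R}^m)$; $\mathrm{NDDE}^0_\tau(\mathcal{X},\mathbb{R}^q)$ is the set of all such $\Phi$ for which the solutions $y(0,c_{\lambda(x)})$ are unique and continuous (and $\Phi$ is continuous). $\Phi$ is non-augmented if $m\le\max\{n,q\}$ and augmented if $m>\max\{n,q\}$. $C^k_b(\mathcal{X},\mathbb{R}^q)$ denotes the $k$ times continuously differentiable maps whose derivatives of orders $1,\dots,k$ are bounded on $\mathcal{X}$. Global Lipschitz continuity of $F$ in the second variable on $\mathbb{R}\times\Omega_0$ with constant $K$ means $\|F(t,u)-F(t,v)\|_\infty\le K\|u-v\|_\infty$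 for all $t\in\mathbb{R}$, $u,v\in\Omega_0$. *)

theory Defs
  imports "HOL-Analysis.Analysis"
begin

definition maxnorm :: "real^'n \<Rightarrow> real" where
  "maxnorm x = Max (range (\<lambda>i. \<bar>x $ i\<bar>))"

definition matnorm :: "real^'n^'m \<Rightarrow> real" where
  "matnorm A = (SUP x\<in>{x::real^'n. maxnorm x = 1}. maxnorm (A *v x))"

text \<open>An element of C is represented by a bounded continuous function on the real line
  that is constant outside [-tau,0] (extended by its boundary values); this is a
  bijective representation of C^0([-tau,0],R^m) as a closed linear subspace of the
  Banach space of bounded continuous functions.\<close>

definition Cspace :: "real \<Rightarrow> ((real \<Rightarrow>\<^sub>C (real^'m))) set" where
  "Cspace tau = {u. \<forall>s. apply_bcontfun u s = apply_bcontfun u (max (-tau) (min 0 s))}"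

definition Cnorm :: "real \<Rightarrow> ((real \<Rightarrow>\<^sub>C (real^'m))) \<Rightarrow> real" where
  "Cnorm tau u = (SUP s\<in>{-tau..0}. maxnorm (apply_bcontfun u s))"

definition cnst :: "real^'m \<Rightarrow> ((real \<Rightarrow>\<^sub>C (real^'m)))" where
  "cnst a = const_bcontfun a"

definition seg :: "real \<Rightarrow> (real \<Rightarrow> real^'m) \<Rightarrow> real \<Rightarrow> ((real \<Rightarrow>\<^sub>C (real^'m)))" where
  "seg tau y t = Bcontfun (\<lambda>s. y (t + max (-tau) (min 0 s)))"

text \<open>y is a solution of y' = F(t,y_t), y_{t0} = u on [t0-tau, t0+c), with c > 0 real
  (a finite horizon suffices for all uses below). The derivative at t0 is one-sided.\<close>
definition is_sol :: "real \<Rightarrow> real set \<Rightarrow> ((real \<Rightarrow>\<^sub>C (real^'m))) set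
    \<Rightarrow> (real \<Rightarrow> ((real \<Rightarrow>\<^sub>C (real^'m))) \<Rightarrow> real^'m)
    \<Rightarrow> real \<Rightarrow> ((real \<Rightarrow>\<^sub>C (real^'m))) \<Rightarrow> real \<Rightarrow> (real \<Rightarrow> real^'m) \<Rightarrow> bool" where
  "is_sol tau Ot Oy F t0 u c y \<longleftrightarrow>
     0 < c \<and> continuous_on {t0 - tau..<t0 + c} y \<and>
     (\<forall>s\<in>{-tau..0}. y (t0 + s) = apply_bcontfun u s) \<and>
     (\<forall>t\<in>{t0..<t0 + c}. t \<in> Ot \<and> seg tau y t \<in> Oy \<and>
        (y has_vector_derivative F t (seg tau y t)) (at t within {t0..<t0 + c}))"

text \<open>F is continuous on Omega and k times continuously Frechet differentiable in the
  second variable (relative to the ambient linear subspace V), the j-th derivative being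
  represented as a j-multilinear map acting on lists of directions in V; the derivatives
  of orders 1..k are continuous (in operator norm) and bounded (in operator norm) on Omega.
  For k = 0 this is just continuity on Omega.\<close>
definition C0k_b :: "nat \<Rightarrow> 'a::real_normed_vector set \<Rightarrow> ('p::topological_space \<times> 'a) set
    \<Rightarrow> ('p \<Rightarrow> 'a \<Rightarrow> 'b::real_normed_vector) \<Rightarrow> bool" where
  "C0k_b k V Om F \<longleftrightarrow>
     continuous_on Om (\<lambda>z. F (fst z) (snd z)) \<and>
     (\<exists>D :: nat \<Rightarrow> 'p \<Rightarrow> 'a \<Rightarrow> 'a list \<Rightarrow> 'b.
        (\<forall>z\<in>Om. D 0 (fst z) (snd z) [] = F (fst z) (snd z)) \<and>
        (\<forall>j<k. \<forall>z\<in>Om. \<forall>hs. length hs = j \<and> set hs \<subseteq> V \<longrightarrow>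
           ((\<lambda>v. D j (fst z) v hs) has_derivative (\<lambda>h. D (Suc j) (fst z) (snd z) (h # hs)))
             (at (snd z) within V)) \<and>
        (\<forall>j\<in>{1..k}. \<forall>z\<in>Om. \<forall>e>0. \<exists>U. open U \<and> z \<in> U \<and>
           (\<forall>z'\<in>Om \<inter> U. \<forall>hs. length hs = j \<and> set hs \<subseteq> V \<and> (\<forall>h\<in>set hs. norm h \<le> 1) \<longrightarrow>
              norm (D j (fst z') (snd z') hs - D j (fst z) (snd z) hs) \<le> e)) \<and>
        (\<forall>j\<in>{1..k}. \<exists>B. \<forall>z\<in>Om. \<forall>hs. length hs = j \<and> set hs \<subseteq> V \<and> (\<forall>h\<in>set hs. norm h \<le> 1) \<longrightarrow>
              norm (D j (fst z) (snd z) hs) \<le> B))"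

definition Ck_b :: "nat \<Rightarrow> 'a::real_normed_vector set \<Rightarrow> ('a \<Rightarrow> 'b::real_normed_vector) \<Rightarrow> bool" where
  "Ck_b k S f \<longleftrightarrow> C0k_b k UNIV ({0::real} \<times> S) (\<lambda>_. f)"

definition ndde_map :: "real \<Rightarrow> real \<Rightarrow> real set \<Rightarrow> ((real \<Rightarrow>\<^sub>C (real^'m))) set
    \<Rightarrow> (real \<Rightarrow> ((real \<Rightarrow>\<^sub>C (real^'m))) \<Rightarrow> real^'m)
    \<Rightarrow> real^'n^'m \<Rightarrow> real^'m \<Rightarrow> real^'m^'q \<Rightarrow> real^'q \<Rightarrow> real^'n \<Rightarrow> real^'q" where
  "ndde_map tau T Ot Oy F W b Wt bt x =
     Wt *v (THE v. \<exists>y c. is_sol tau Ot Oy F 0 (cnst (W *v x + b)) c y \<and> T < c \<and> y T = v) + bt"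

text \<open>(Ot, Oy, F, W, b, Wt, bt) defines an element of NDDE^k_tau(X, R^q):
  well-definedness conditions (maximal interval of existence contains [-tau,T]),
  uniqueness of solutions, and the regularity class (k = 0: Phi continuous;
  k \<ge> 1: F in C^{0,k}_b).\<close>
definition is_NDDE :: "nat \<Rightarrow> real \<Rightarrow> real \<Rightarrow> (real^'n) set \<Rightarrow> real set \<Rightarrow> ((real \<Rightarrow>\<^sub>C (real^'m))) set
    \<Rightarrow> (real \<Rightarrow> ((real \<Rightarrow>\<^sub>C (real^'m))) \<Rightarrow> real^'m)
    \<Rightarrow> real^'n^'m \<Rightarrow> real^'m \<Rightarrow> real^'m^'q \<Rightarrow> real^'q \<Rightarrow> bool" where
  "is_NDDE k tau T X Ot Oy F W b Wt bt \<longleftrightarrow>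
     open Ot \<and> openin (top_of_set (Cspace tau)) Oy \<and>
     {0..T} \<subseteq> Ot \<and> (\<forall>x\<in>X. cnst (W *v x + b) \<in> Oy) \<and>
     (\<forall>x\<in>X. \<exists>y c. T < c \<and> is_sol tau Ot Oy F 0 (cnst (W *v x + b)) c y) \<and>
     (\<forall>x\<in>X. \<forall>y1 c1 y2 c2. is_sol tau Ot Oy F 0 (cnst (W *v x + b)) c1 y1 \<and>
                          is_sol tau Ot Oy F 0 (cnst (W *v x + b)) c2 y2 \<longrightarrow>
                          (\<forall>t\<in>{-tau..<min c1 c2}. y1 t = y2 t)) \<and>
     (if k = 0 then continuous_on X (ndde_map tau T Ot Oy F W b Wt bt)
      else C0k_b k (Cspace tau) (Ot \<times> Oy) F)"

end

theory Submission imports Defs begin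

lemma maxnorm_ge: "\<bar>x $ i\<bar> \<le> maxnorm x"
  unfolding maxnorm_def by (rule Max_ge) auto

lemma maxnorm_le: "(\<And>i. \<bar>x $ i\<bar> \<le> B) \<Longrightarrow> maxnorm x \<le> B"
  unfolding maxnorm_def by (subst Max_le_iff) auto

lemma maxnorm_attain: "\<exists>i. maxnorm x = \<bar>x $ i\<bar>"
proof -
  have "Max (range (\<lambda>i. \<bar>x $ i\<bar>)) \<in> range (\<lambda>i. \<bar>x $ i\<bar>)"
    by (rule Max_in) auto
  then obtain i where "Max (range (\<lambda>i. \<bar>x $ i\<bar>)) = \<bar>x $ i\<bar>" by blast
  then show ?thesis unfolding maxnorm_def by blast
qed

lemma maxnorm_scaleR: "maxnorm (c *\<^sub>R x) = \<bar>c\<bar> * maxnorm x"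
proof (rule antisym)
  show "maxnorm (c *\<^sub>R x) \<le> \<bar>c\<bar> * maxnorm x"
    by (rule maxnorm_le) (simp add: abs_mult maxnorm_ge mult_left_mono)
  obtain i where "maxnorm x = \<bar>x $ i\<bar>" using maxnorm_attain by blast
  moreover have "\<bar>(c *\<^sub>R x) $ i\<bar> \<le> maxnorm (c *\<^sub>R x)" by (rule maxnorm_ge)
  ultimately show "\<bar>c\<bar> * maxnorm x \<le> maxnorm (c *\<^sub>R x)" by (simp add: abs_mult)
qed

lemma maxnorm_one: "maxnorm (1::real^'n) = 1"
  unfolding maxnorm_def by simp

definition Emb :: "('n \<Rightarrow> 'm) \<Rightarrow> real^'n^'m" where
  "Emb e = (\<chi> i j. if i = e j then 1 else 0)"
definition Prj :: "('q \<Rightarrow> 'm) \<Rightarrow> real^'m^'q" where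
  "Prj e = (\<chi> i j. if j = e i then 1 else 0)"

lemma Emb_apply: "inj e \<Longrightarrow> (Emb e *v z) $ (e j) = z $ j"
proof -
  assume "inj e"
  then have "\<And>k. (e j = e k) = (k = j)" by (auto dest: injD)
  then have "(\<Sum>k\<in>UNIV. (if e j = e k then 1 else 0) * z $ k) = (\<Sum>k\<in>UNIV. if k = j then z $ k else 0)"
    by (intro sum.cong) auto
  then show ?thesis
    by (simp add: Emb_def matrix_vector_mult_def)
qed

lemma Emb_other: "i \<notin> range e \<Longrightarrow> (Emb e *v z) $ i = 0"
  by (auto simp: Emb_def matrix_vector_mult_def intro!: sum.neutral)

lemma Prj_apply: "(Prj e *v y) $ i = y $ (e i)"
proof -
  have "(\<Sum>k\<in>UNIV. (if k = e i then 1 else 0) * y $ k) = (\<Sum>k\<in>UNIV. if k = e i then y $ k else 0)"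
    by (intro sum.cong) auto
  then show ?thesis by (simp add: Prj_def matrix_vector_mult_def)
qed

lemma Prj_Emb: "inj e \<Longrightarrow> Prj e *v (Emb e *v z) = z"
  by (simp add: vec_eq_iff Prj_apply Emb_apply)

lemma Prj_Emb_disj: "range e \<inter> range e' = {} \<Longrightarrow> Prj e *v (Emb e' *v z) = 0"
  by (auto simp: vec_eq_iff Prj_apply intro!: Emb_other)

lemma sq_norm_vec: "(norm (x::real^'n))^2 = (\<Sum>i\<in>UNIV. (x $ i)^2)"
  unfolding power2_norm_eq_inner inner_vec_def by (simp add: power2_eq_square)

lemma norm_Prj: "inj e \<Longrightarrow> norm (Prj e *v y) \<le> norm y"
proof -
  assume inj: "inj e"
  have "(norm (Prj e *v y))^2 = (\<Sum>i\<in>UNIV. (y $ (e i))^2)"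
    by (simp add: sq_norm_vec Prj_apply)
  also have "\<dots> = (\<Sum>k\<in>range e. (y $ k)^2)"
    using sum.reindex[of e UNIV "\<lambda>k. (y $ k)^2"] inj by simp
  also have "\<dots> \<le> (\<Sum>k\<in>UNIV. (y $ k)^2)"
    by (rule sum_mono2) auto
  also have "\<dots> = (norm y)^2" by (simp add: sq_norm_vec)
  finally show ?thesis by (simp add: power2_le_iff_abs_le)
qed

lemma norm_Emb: "inj e \<Longrightarrow> norm (Emb e *v z) = norm z"
proof -
  assume inj: "inj e"
  have "(norm (Emb e *v z))^2 = (\<Sum>k\<in>UNIV. ((Emb e *v z) $ k)^2)"
    by (simp add: sq_norm_vec)
  also have "\<dots> = (\<Sum>k\<in>range e. ((Emb e *v z) $ k)^2)"
    by (rule sum.mono_neutral_right) (auto simp: Emb_other)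
  also have "\<dots> = (\<Sum>i\<in>UNIV. ((Emb e *v z) $ (e i))^2)"
    using sum.reindex[of e UNIV "\<lambda>k. ((Emb e *v z) $ k)^2"] inj by simp
  also have "\<dots> = (norm z)^2" by (simp add: sq_norm_vec Emb_apply inj)
  finally show ?thesis by (simp add: power2_eq_iff_nonneg)
qed

lemma maxnorm_Emb: "inj e \<Longrightarrow> maxnorm (Emb e *v z) = maxnorm z"
proof (rule antisym)
  assume inj: "inj e"
  show "maxnorm (Emb e *v z) \<le> maxnorm z"
  proof (rule maxnorm_le)
    fix i show "\<bar>(Emb e *v z) $ i\<bar> \<le> maxnorm z"
      by (cases "i \<in> range e") (auto simp: Emb_apply Emb_other inj maxnorm_ge order_trans[OF _ maxnorm_ge])
  qed
  obtain j where "maxnorm z = \<bar>z $ j\<bar>" using maxnorm_attain by blast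
  then show "maxnorm z \<le> maxnorm (Emb e *v z)"
    using maxnorm_ge[of "Emb e *v z" "e j"] by (simp add: Emb_apply inj)
qed

lemma maxnorm_Prj: "maxnorm (Prj e *v y) \<le> maxnorm y"
  by (rule maxnorm_le) (simp add: Prj_apply maxnorm_ge)

lemma homog:
  fixes E :: "nat \<Rightarrow> 'a::real_normed_vector \<Rightarrow> 'a list \<Rightarrow> 'b::real_normed_vector"
  assumes X: "open X"
    and D: "\<And>j x hs. j < k \<Longrightarrow> x \<in> X \<Longrightarrow> length hs = j \<Longrightarrow>
         ((\<lambda>v. E j v hs) has_derivative (\<lambda>h. E (Suc j) x (h#hs))) (at x)"
  shows "j \<le> k \<Longrightarrow> x \<in> X \<Longrightarrow> length hs = j \<Longrightarrow> E j x (map (scaleR c) hs) = c^j *\<^sub>R E j x hs"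
proof (induction j arbitrary: x hs)
  case 0 then show ?case by simp
next
  case (Suc j)
  then obtain h hs0 where hs: "hs = h # hs0" and l: "length hs0 = j" by (cases hs) auto
  have jk: "j < k" using Suc by simp
  have d1: "((\<lambda>v. E j v (map (scaleR c) hs0)) has_derivative (\<lambda>h. E (Suc j) x (h # map (scaleR c) hs0))) (at x)"
    using D[OF jk Suc.prems(2)] l by simp
  have d2: "((\<lambda>v. E j v hs0) has_derivative (\<lambda>h. E (Suc j) x (h#hs0))) (at x)"
    using D[OF jk Suc.prems(2)] l by simp
  have d3: "((\<lambda>v. c^j *\<^sub>R E j v hs0) has_derivative (\<lambda>h. c^j *\<^sub>R E (Suc j) x (h#hs0))) (at x)"
    by (rule bounded_linear.has_derivative[OF bounded_linear_scaleR_right d2])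
  have d4: "((\<lambda>v. E j v (map (scaleR c) hs0)) has_derivative (\<lambda>h. c^j *\<^sub>R E (Suc j) x (h#hs0))) (at x)"
    by (rule has_derivative_transform_within_open[OF d3 X Suc.prems(2)])
      (use Suc.IH jk l in simp)
  have eq: "(\<lambda>h. E (Suc j) x (h # map (scaleR c) hs0)) = (\<lambda>h. c^j *\<^sub>R E (Suc j) x (h#hs0))"
    by (rule has_derivative_unique[OF d1 d4])
  have lin: "linear (\<lambda>h. E (Suc j) x (h#hs0))" by (rule has_derivative_linear[OF d2])
  have "E (Suc j) x (map (scaleR c) hs) = c^j *\<^sub>R E (Suc j) x ((c *\<^sub>R h) # hs0)"
    using fun_cong[OF eq, of "c *\<^sub>R h"] hs by simp
  also have "\<dots> = c^j *\<^sub>R c *\<^sub>R E (Suc j) x (h # hs0)"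
    using linear_scale[OF lin, of c h] by simp
  finally show ?case using hs by simp
qed


lemma seg_apply:
  fixes y :: "real \<Rightarrow> real^'m"
  assumes "continuous_on {t - tau..t} y" "0 \<le> tau"
  shows "apply_bcontfun (seg tau y t) s = y (t + max (-tau) (min 0 s))"
proof -
  let ?g = "\<lambda>s. t + max (-tau) (min 0 s)"
  have gi: "?g ` UNIV \<subseteq> {t - tau..t}" using assms(2) by auto
  have c: "continuous_on UNIV (\<lambda>s. y (?g s))"
    by (rule continuous_on_compose2[OF assms(1) _ gi]) (intro continuous_intros)
  have "range (\<lambda>s. y (?g s)) \<subseteq> y ` {t - tau..t}" using gi by auto
  moreover have "bounded (y ` {t - tau..t})"
    by (intro compact_imp_bounded compact_continuous_image assms(1) compact_Icc)
  ultimately have b: "bounded (range (\<lambda>s. y (?g s)))" by (rule bounded_subset[rotated])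
  have "(\<lambda>s. y (?g s)) \<in> bcontfun" using c b by (simp add: bcontfun_def)
  then show ?thesis unfolding seg_def by (simp add: Bcontfun_inverse)
qed

lemma seg_Cspace:
  fixes y :: "real \<Rightarrow> real^'m"
  assumes "continuous_on {t - tau..t} y" "0 \<le> tau"
  shows "seg tau y t \<in> Cspace tau"
  unfolding Cspace_def using seg_apply[OF assms] assms(2)
  by (auto simp: max_def min_def)

lemma ev_bl: "bounded_linear (\<lambda>u::(real \<Rightarrow>\<^sub>C 'b::real_normed_vector). apply_bcontfun u 0)"
  by (rule bounded_linear_intro[where K=1]) (auto simp: norm_bounded)

theorem mainTheorem5:
  fixes k :: nat and X :: "(real^'n) set" and Psi :: "real^'n \<Rightarrow> real^'q"
    and KPsi T tau w wt K :: real
  assumes X_open: "open X"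
    and Psi_reg: "Ck_b k X Psi"
    and KPsi: "0 \<le> KPsi"
    and Psi_lip: "\<forall>x\<in>X. \<forall>x'\<in>X. maxnorm (Psi x - Psi x') \<le> KPsi * maxnorm (x - x')"
    and m_ge: "CARD('m) \<ge> CARD('n) + CARD('q)"
    and T_pos: "0 < T" and tau: "0 \<le> tau" "tau \<le> T"
    and w_pos: "0 < w" and wt_pos: "0 < wt" and K_nn: "0 \<le> K"
    and KT: "K * T \<ge> KPsi / (w * wt)"
  shows "\<exists>(Oy :: ((real \<Rightarrow>\<^sub>C (real^'m))) set) F (W :: real^'n^'m) b (Wt :: real^'m^'q) bt.
           is_NDDE k tau T X UNIV Oy F W b Wt bt \<and>
           CARD('m) > max CARD('n) CARD('q) \<and>
           (\<forall>x\<in>X. ndde_map tau T UNIV Oy F W b Wt bt x = Psi x) \<and>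
           (\<forall>t. \<forall>u\<in>cnst ` (\<lambda>x. W *v x + b) ` X. \<forall>v\<in>cnst ` (\<lambda>x. W *v x + b) ` X.
               maxnorm (F t u - F t v) \<le> K * Cnorm tau (u - v)) \<and>
           matnorm W = w \<and> matnorm Wt = wt"
proof -
  have "CARD('n) \<le> CARD('m)" using m_ge by simp
  then obtain en :: "'n \<Rightarrow> 'm" where en: "inj en"
    using card_le_inj[of "UNIV::'n set" "UNIV::'m set"] by auto
  have "card (UNIV - range en) = CARD('m) - CARD('n)"
    using card_Diff_subset[of "range en" UNIV] card_image[OF en] by simp
  then have "CARD('q) \<le> card (UNIV - range en)" using m_ge by simp
  then obtain eq :: "'q \<Rightarrow> 'm" where eq: "inj_on eq UNIV" and disj0: "range eq \<subseteq> UNIV - range en"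
    using card_le_inj[of "UNIV::'q set" "UNIV - range en"] by auto
  have eqn[simp]: "eq i \<notin> range en" for i using disj0 by auto
  have ene[simp]: "en j \<notin> range eq" for j using disj0 by auto
  define cQ where "cQ = 1 / (wt * T)"
  have cQ: "0 < cQ" using wt_pos T_pos by (simp add: cQ_def)
  define W :: "real^'n^'m" where "W = w *\<^sub>R Emb en"
  define Wt :: "real^'m^'q" where "Wt = wt *\<^sub>R Prj eq"
  define b :: "real^'m" where "b = 0"
  define bt :: "real^'q" where "bt = 0"
  define P :: "real^'m \<Rightarrow> real^'n" where "P y = (1/w) *\<^sub>R (Prj en *v y)" for y
  define Q :: "real^'q \<Rightarrow> real^'m" where "Q z = cQ *\<^sub>R (Emb eq *v z)" for z
  define L0 :: "(real \<Rightarrow>\<^sub>C (real^'m)) \<Rightarrow> real^'n" where "L0 u = Prj en *v apply_bcontfun u 0" for u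
  define L :: "(real \<Rightarrow>\<^sub>C (real^'m)) \<Rightarrow> real^'n" where "L u = (1/w) *\<^sub>R L0 u" for u
  define Oy where "Oy = Cspace tau \<inter> {u. L u \<in> X}"
  define F :: "real \<Rightarrow> (real \<Rightarrow>\<^sub>C (real^'m)) \<Rightarrow> real^'m" where "F t u = Q (Psi (L u))" for t u
  define ys where "ys x t = W *v x + max 0 t *\<^sub>R Q (Psi x)" for x t
  have Wv: "W *v x = w *\<^sub>R (Emb en *v x)" for x by (simp add: W_def scaleR_matrix_vector_assoc)
  have Wtv: "Wt *v y = wt *\<^sub>R (Prj eq *v y)" for y by (simp add: Wt_def scaleR_matrix_vector_assoc)
  have blP: "bounded_linear P" unfolding P_def
    by (intro bounded_linear_compose[OF bounded_linear_scaleR_right] matrix_vector_mul_bounded_linear)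
  have blQ: "bounded_linear Q" unfolding Q_def
    by (intro bounded_linear_compose[OF bounded_linear_scaleR_right] matrix_vector_mul_bounded_linear)
  have blL0: "bounded_linear L0" unfolding L0_def
    by (intro bounded_linear_compose[OF matrix_vector_mul_bounded_linear] ev_bl)
  have blL: "bounded_linear L" unfolding L_def
    by (intro bounded_linear_compose[OF bounded_linear_scaleR_right] blL0)
  have PQ: "P (Q z) = 0" for z
    by (simp add: P_def Q_def vec_eq_iff Prj_apply Emb_other)
  have PW: "P (W *v x) = x" for x
    using w_pos by (simp add: P_def Wv vec_eq_iff Prj_apply Emb_apply en)
  have PWtQ: "Prj eq *v Q z = cQ *\<^sub>R z" for z
    using eq by (simp add: Q_def vec_eq_iff Prj_apply Emb_apply)
  have PWtW: "Prj eq *v (W *v x) = 0" for x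
    by (simp add: Wv vec_eq_iff Prj_apply Emb_other)
  have ycont: "continuous_on S (ys x)" for x S unfolding ys_def by (intro continuous_intros)
  have Lseg: "L (seg tau y t) = P (y t)" if "continuous_on {t - tau..t} y" for y t
    using seg_apply[OF that tau(1)] tau(1) by (simp add: L_def L0_def P_def)
  have cnst_ap: "apply_bcontfun (cnst a) s = a" for a s by (simp add: cnst_def)
  have cnstC: "cnst a \<in> Cspace tau" for a by (simp add: Cspace_def cnst_def)
  have Lcnst: "L (cnst a) = P a" for a by (simp add: L_def L0_def P_def cnst_ap)
  have ysP: "P (ys x t) = x" for x t
    using linear_add[OF bounded_linear.linear[OF blP]] linear_scale[OF bounded_linear.linear[OF blP]]
    by (simp add: ys_def PW PQ)
  have ex: "is_sol tau UNIV Oy F 0 (cnst (W *v x + b)) (T+1) (ys x)" if x: "x \<in> X" for x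
  proof -
    have seg: "seg tau (ys x) t \<in> Oy" for t
      using seg_Cspace[OF ycont tau(1)] Lseg[OF ycont] ysP x by (simp add: Oy_def)
    have Fv: "F t (seg tau (ys x) t) = Q (Psi x)" for t using Lseg[OF ycont] ysP by (simp add: F_def)
    have der: "(ys x has_vector_derivative Q (Psi x)) (at t within {0..<0 + (T+1)})"
      if "t \<in> {0..<0+(T+1)}" for t
    proof -
      have "((\<lambda>t. W *v x + t *\<^sub>R Q (Psi x)) has_vector_derivative Q (Psi x)) (at t within {0..<0 + (T+1)})"
        by (auto intro!: derivative_eq_intros)
      then show ?thesis
        by (rule has_vector_derivative_transform_within[where d=1]) (use that in \<open>auto simp: ys_def\<close>)
    qed
    show ?thesis unfolding is_sol_def
      using T_pos seg Fv der ycont[where x=x and S="{-tau..<T+1}", unfolded ys_def] by (auto simp: cnst_ap ys_def b_def)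
  qed
  have uniq: "\<forall>t\<in>{-tau..<c}. y t = ys x t"
    if x: "x \<in> X" and sol: "is_sol tau UNIV Oy F 0 (cnst (W *v x + b)) c y" for x c y
  proof -
    from sol have c0: "0 < c" and yc: "continuous_on {0 - tau..<0 + c} y"
      and init: "\<And>s. s \<in> {-tau..0} \<Longrightarrow> y (0 + s) = W *v x"
      and dy: "\<And>t. t \<in> {0..<0+c} \<Longrightarrow> (y has_vector_derivative F t (seg tau y t)) (at t within {0..<0+c})"
      unfolding is_sol_def by (auto simp: cnst_ap b_def)
    have yc': "continuous_on {t - tau..t} y" if "t \<in> {0..<c}" for t
      by (rule continuous_on_subset[OF yc]) (use that in auto)
    have dy': "(y has_vector_derivative Q (Psi (P (y t)))) (at t within {0..<c})" if "t \<in> {0..<c}" for t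
      using dy[of t] that Lseg[OF yc'[OF that]] by (simp add: F_def)
    have y0: "y 0 = W *v x" using init[of 0] tau by simp
    have "\<exists>C. \<forall>t\<in>{0..<c}. P (y t) = C"
    proof (rule has_derivative_zero_constant)
      show "convex {0..<c}" by (rule convex_real_interval)
      fix t assume t: "t \<in> {0..<c}"
      have "((\<lambda>t. P (y t)) has_derivative (\<lambda>h. P (h *\<^sub>R Q (Psi (P (y t)))))) (at t within {0..<c})"
        using bounded_linear.has_derivative[OF blP dy'[OF t, unfolded has_vector_derivative_def]] .
      then show "((\<lambda>t. P (y t)) has_derivative (\<lambda>h. 0)) (at t within {0..<c})"
        using linear_scale[OF bounded_linear.linear[OF blP]] by (simp add: PQ)
    qed
    then obtain C where C: "\<forall>t\<in>{0..<c}. P (y t) = C" by blast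
    have Py: "P (y t) = x" if "t \<in> {0..<c}" for t
      using C that c0 y0 PW by force
    have "\<exists>C. \<forall>t\<in>{0..<c}. y t - t *\<^sub>R Q (Psi x) = C"
    proof (rule has_derivative_zero_constant)
      show "convex {0..<c}" by (rule convex_real_interval)
      fix t assume t: "t \<in> {0..<c}"
      have "((\<lambda>t. y t - t *\<^sub>R Q (Psi x)) has_vector_derivative (Q (Psi x) - 1 *\<^sub>R Q (Psi x))) (at t within {0..<c})"
        using dy'[OF t] Py[OF t] by (auto intro!: derivative_eq_intros)
      then show "((\<lambda>t. y t - t *\<^sub>R Q (Psi x)) has_derivative (\<lambda>h. 0)) (at t within {0..<c})"
        by (simp add: has_vector_derivative_def)
    qed
    then obtain C2 where C2: "\<forall>t\<in>{0..<c}. y t - t *\<^sub>R Q (Psi x) = C2" by blast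
    have "C2 = W *v x" using C2 c0 y0 by force
    then have yt: "y t = W *v x + t *\<^sub>R Q (Psi x)" if "t \<in> {0..<c}" for t
      using C2 that by (metis diff_add_cancel add.commute)
    show ?thesis
    proof
      fix t assume t: "t \<in> {-tau..<c}"
      show "y t = ys x t"
      proof (cases "t < 0")
        case True then show ?thesis using init[of t] t by (simp add: ys_def)
      next
        case False then show ?thesis using yt[of t] t by (simp add: ys_def)
      qed
    qed
  qed
  have nd: "ndde_map tau T UNIV Oy F W b Wt bt x = Psi x" if x: "x \<in> X" for x
  proof -
    have "(THE v. \<exists>y c. is_sol tau UNIV Oy F 0 (cnst (W *v x + b)) c y \<and> T < c \<and> y T = v) = ys x T"
    proof (rule the_equality)
      show "\<exists>y c. is_sol tau UNIV Oy F 0 (cnst (W *v x + b)) c y \<and> T < c \<and> y T = ys x T"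
        using ex[OF x] T_pos by force
      fix v assume "\<exists>y c. is_sol tau UNIV Oy F 0 (cnst (W *v x + b)) c y \<and> T < c \<and> y T = v"
      then obtain y c where "is_sol tau UNIV Oy F 0 (cnst (W *v x + b)) c y" "T < c" "y T = v" by blast
      then show "v = ys x T" using uniq[OF x] tau T_pos by force
    qed
    moreover have "Wt *v ys x T + bt = Psi x"
      using T_pos wt_pos
      by (simp add: Wtv bt_def ys_def matrix_vector_right_distrib PWtW PWtQ cQ_def
          scaleR_matrix_vector_assoc[symmetric] matrix_scaleR_vector_ac)
    ultimately show ?thesis unfolding ndde_map_def by simp
  qed
  have lip: "maxnorm (F t u - F t v) \<le> K * Cnorm tau (u - v)"
    if uX: "u \<in> cnst ` (\<lambda>x. W *v x + b) ` X" and vX: "v \<in> cnst ` (\<lambda>x. W *v x + b) ` X" for t u v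
  proof -
    obtain x where x1: "x \<in> X" "u = cnst (W *v x + b)" using uX by blast
    obtain x' where x2: "x' \<in> X" "v = cnst (W *v x' + b)" using vX by blast
    note x = x1(1) x2(1) x1(2) x2(2)
    have mn0: "0 \<le> maxnorm (x - x')" using maxnorm_ge[of "x - x'"] by (meson abs_ge_zero order_trans)
    have "F t u - F t v = cQ *\<^sub>R (Emb eq *v (Psi x - Psi x'))"
      using x by (simp add: F_def Lcnst b_def PW Q_def matrix_vector_mult_diff_distrib algebra_simps)
    then have "maxnorm (F t u - F t v) = cQ * maxnorm (Psi x - Psi x')"
      using cQ by (simp add: maxnorm_scaleR maxnorm_Emb eq)
    also have "\<dots> \<le> cQ * (KPsi * maxnorm (x - x'))"
      using Psi_lip x cQ by (simp add: mult_left_mono)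
    also have "\<dots> \<le> K * (w * maxnorm (x - x'))"
    proof -
      have "KPsi \<le> K * T * (w * wt)" using KT w_pos wt_pos by (simp add: divide_le_eq mult.commute)
      then have "cQ * KPsi \<le> K * w"
        using T_pos wt_pos by (simp add: cQ_def divide_le_eq field_simps)
      then show ?thesis using mn0 by (metis mult.assoc mult_right_mono)
    qed
    also have "w * maxnorm (x - x') = Cnorm tau (u - v)"
    proof -
      have "Cnorm tau (u - v) = (SUP s\<in>{-tau..0}. maxnorm (W *v x - W *v x'))"
        unfolding Cnorm_def using x by (simp add: cnst_ap b_def)
      also have "\<dots> = maxnorm (W *v x - W *v x')" using tau by (intro cSUP_const) auto
      also have "\<dots> = w * maxnorm (x - x')"
        using w_pos by (simp add: Wv matrix_vector_mult_diff_distrib[symmetric] maxnorm_scaleR maxnorm_Emb en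
              scaleR_right_diff_distrib[symmetric])
      finally show ?thesis by simp
    qed
    finally show ?thesis .
  qed
  have mW: "matnorm W = w"
  proof -
    have "matnorm W = (SUP x\<in>{x::real^'n. maxnorm x = 1}. w)"
      unfolding matnorm_def using w_pos by (intro SUP_cong) (auto simp: Wv maxnorm_scaleR maxnorm_Emb en)
    also have "\<dots> = w" using maxnorm_one by (intro cSUP_const) auto
    finally show ?thesis .
  qed
  have mWt: "matnorm Wt = wt"
    unfolding matnorm_def
  proof (rule cSup_eq_maximum)
    have "Prj eq *v (1::real^'m) = 1" by (simp add: vec_eq_iff Prj_apply)
    then have "maxnorm (Wt *v 1) = wt" using wt_pos by (simp add: Wtv maxnorm_scaleR maxnorm_one)
    then show "wt \<in> (\<lambda>x. maxnorm (Wt *v x)) ` {x. maxnorm x = 1}" using maxnorm_one by force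
    fix r assume "r \<in> (\<lambda>x. maxnorm (Wt *v x)) ` {x. maxnorm x = 1}"
    then obtain y where "maxnorm y = 1" "r = maxnorm (Wt *v y)" by auto
    then show "r \<le> wt" using wt_pos maxnorm_Prj[of eq y] by (simp add: Wtv maxnorm_scaleR)
  qed
  have card: "CARD('m) > max CARD('n) CARD('q)"
  proof -
    have p: "0 < CARD('n)" "0 < CARD('q)" by (simp_all add: card_gt_0_iff)
    show ?thesis unfolding max_less_iff_conj using m_ge p by linarith
  qed
  have openOy: "openin (top_of_set (Cspace tau)) Oy"
    unfolding Oy_def
  proof (rule openin_open_Int)
    have "open (L -` X)" by (rule open_vimage[OF X_open linear_continuous_on[OF blL]])
    then show "open {u. L u \<in> X}" by (simp add: vimage_def)
  qed
  from Psi_reg obtain D :: "nat \<Rightarrow> real \<Rightarrow> real^'n \<Rightarrow> (real^'n) list \<Rightarrow> real^'q" where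
    Dc: "continuous_on ({0::real} \<times> X) (\<lambda>z. Psi (snd z))"
    and D0: "\<forall>z\<in>{0::real} \<times> X. D 0 (fst z) (snd z) [] = Psi (snd z)"
    and Db: "\<forall>j<k. \<forall>z\<in>{0::real} \<times> X. \<forall>hs. length hs = j \<and> set hs \<subseteq> UNIV \<longrightarrow>
           ((\<lambda>v. D j (fst z) v hs) has_derivative (\<lambda>h. D (Suc j) (fst z) (snd z) (h # hs)))
             (at (snd z) within UNIV)"
    and Dcont: "\<forall>j\<in>{1..k}. \<forall>z\<in>{0::real} \<times> X. \<forall>e>0. \<exists>U. open U \<and> z \<in> U \<and>
           (\<forall>z'\<in>({0::real} \<times> X) \<inter> U. \<forall>hs. length hs = j \<and> set hs \<subseteq> UNIV \<and> (\<forall>h\<in>set hs. norm h \<le> 1) \<longrightarrow>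
              norm (D j (fst z') (snd z') hs - D j (fst z) (snd z) hs) \<le> e)"
    and Dbd: "\<forall>j\<in>{1..k}. \<exists>B. \<forall>z\<in>{0::real} \<times> X. \<forall>hs. length hs = j \<and> set hs \<subseteq> UNIV \<and> (\<forall>h\<in>set hs. norm h \<le> 1) \<longrightarrow>
              norm (D j (fst z) (snd z) hs) \<le> B"
    unfolding Ck_b_def C0k_b_def by blast
  have Psic: "continuous_on X Psi"
  proof -
    have "continuous_on X (\<lambda>x. Psi (snd (0::real, x)))"
      by (rule continuous_on_compose2[OF Dc]) (auto intro!: continuous_intros)
    then show ?thesis by simp
  qed
  have hom: "D j 0 x (map (scaleR c) hs) = c^j *\<^sub>R D j 0 x hs"
    if "j \<le> k" "x \<in> X" "length hs = j" for j x hs c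
  proof (rule homog[OF X_open _ that, where E="\<lambda>j x hs. D j 0 x hs"])
    fix j x and hs :: "(real^'n) list" assume "j < k" "x \<in> X" "length hs = j"
    then show "((\<lambda>v. D j 0 v hs) has_derivative (\<lambda>h. D (Suc j) 0 x (h#hs))) (at x)"
      using Db[rule_format, of j "(0, x)" hs] by simp
  qed
  have mapL: "map L hs = map (scaleR (1/w)) (map L0 hs)" for hs by (simp add: L_def)
  have nL0: "norm (L0 h) \<le> norm h" for h
    unfolding L0_def using norm_Prj[OF en] norm_bounded order_trans by blast
  have Qlin: "linear Q" by (rule bounded_linear.linear[OF blQ])
  have normQ: "norm (Q z) = cQ * norm z" for z using cQ by (simp add: Q_def norm_Emb eq)
  have Fc: "continuous_on (UNIV \<times> Oy) (\<lambda>z. F (fst z) (snd z))"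
  proof -
    have "continuous_on (UNIV \<times> Oy) (\<lambda>z. Psi (L (snd z)))"
      by (rule continuous_on_compose2[OF Psic])
        (auto simp: Oy_def intro!: continuous_intros linear_continuous_on[OF blL] continuous_on_compose2[OF linear_continuous_on[OF blL]])
    then show ?thesis unfolding F_def
      by (rule continuous_on_compose2[OF linear_continuous_on[OF blQ]]) auto
  qed
  have reg: "C0k_b k (Cspace tau) (UNIV \<times> Oy) F" if k1: "k \<noteq> 0"
  proof -
    define D' where "D' j t u hs = Q (D j 0 (L u) (map L hs))" for j and t :: real and u hs
    show ?thesis unfolding C0k_b_def
    proof (intro conjI exI[of _ D'] Fc ballI allI impI)
      fix z :: "real \<times> (real \<Rightarrow>\<^sub>C (real^'m))" assume z: "z \<in> UNIV \<times> Oy"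
      then have "L (snd z) \<in> X" by (auto simp: Oy_def)
      then show "D' 0 (fst z) (snd z) [] = F (fst z) (snd z)"
        using D0 by (auto simp: D'_def F_def)
    next
      fix j and z :: "real \<times> (real \<Rightarrow>\<^sub>C (real^'m))" and hs :: "(real \<Rightarrow>\<^sub>C (real^'m)) list" assume j: "j < k" and z: "z \<in> UNIV \<times> Oy" and hs: "length hs = j \<and> set hs \<subseteq> Cspace tau"
      then have x: "L (snd z) \<in> X" by (auto simp: Oy_def)
      have d: "((\<lambda>v. D j 0 v (map L hs)) has_derivative (\<lambda>h. D (Suc j) 0 (L (snd z)) (h # map L hs))) (at (L (snd z)))"
        using Db[rule_format, of j "(0, L (snd z))" "map L hs"] j x hs by simp
      have "((\<lambda>v. D j 0 (L v) (map L hs)) has_derivative (\<lambda>h. D (Suc j) 0 (L (snd z)) (L h # map L hs))) (at (snd z) within Cspace tau)"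
        using has_derivative_compose[OF bounded_linear_imp_has_derivative[OF blL] d] by simp
      from bounded_linear.has_derivative[OF blQ this]
      show "((\<lambda>v. D' j (fst z) v hs) has_derivative (\<lambda>h. D' (Suc j) (fst z) (snd z) (h # hs))) (at (snd z) within Cspace tau)"
        by (simp add: D'_def)
    next
      fix j and z :: "real \<times> (real \<Rightarrow>\<^sub>C (real^'m))" and e :: real assume j: "j \<in> {1..k}" and z: "z \<in> UNIV \<times> Oy" and e: "0 < e"
      let ?x = "L (snd z)"
      have x: "?x \<in> X" using z by (auto simp: Oy_def)
      define e' where "e' = e / (cQ * (1/w)^j)"
      have e': "e' > 0" using e cQ w_pos by (simp add: e'_def)
      have ce: "cQ * (1/w)^j * e' = e" using cQ w_pos by (simp add: e'_def)
      obtain U0 where U0: "open U0" "(0, ?x) \<in> U0" and U0b: "\<forall>z'\<in>({0::real} \<times> X) \<inter> U0. \<forall>hs. length hs = j \<and> set hs \<subseteq> UNIV \<and> (\<forall>h\<in>set hs. norm h \<le> 1) \<longrightarrow>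
              norm (D j (fst z') (snd z') hs - D j 0 ?x hs) \<le> e'"
        using Dcont[rule_format, of j "(0, ?x)" e'] j x e' by auto
      have cont: "continuous_on UNIV (\<lambda>z::real \<times> (real \<Rightarrow>\<^sub>C (real^'m)). (0::real, L (snd z)))"
        by (intro continuous_intros continuous_on_compose2[OF linear_continuous_on[OF blL]]) auto
      show "\<exists>U. open U \<and> z \<in> U \<and> (\<forall>z'\<in>(UNIV \<times> Oy) \<inter> U. \<forall>hs. length hs = j \<and> set hs \<subseteq> Cspace tau \<and> (\<forall>h\<in>set hs. norm h \<le> 1) \<longrightarrow>
              norm (D' j (fst z') (snd z') hs - D' j (fst z) (snd z) hs) \<le> e)"
      proof (intro exI[of _ "(\<lambda>z::real \<times> (real \<Rightarrow>\<^sub>C (real^'m)). (0::real, L (snd z))) -` U0"] conjI ballI allI impI)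
        show "open ((\<lambda>z::real \<times> (real \<Rightarrow>\<^sub>C (real^'m)). (0::real, L (snd z))) -` U0)" using open_vimage[OF U0(1) cont] by simp
        show "z \<in> (\<lambda>z::real \<times> (real \<Rightarrow>\<^sub>C (real^'m)). (0::real, L (snd z))) -` U0" using U0(2) by simp
        fix z' :: "real \<times> (real \<Rightarrow>\<^sub>C (real^'m))" and hs :: "(real \<Rightarrow>\<^sub>C (real^'m)) list" assume z': "z' \<in> (UNIV \<times> Oy) \<inter> (\<lambda>z::real \<times> (real \<Rightarrow>\<^sub>C (real^'m)). (0::real, L (snd z))) -` U0"
          and hs: "length hs = j \<and> set hs \<subseteq> Cspace tau \<and> (\<forall>h\<in>set hs. norm h \<le> 1)"
        let ?x' = "L (snd z')"
        have x': "(0, ?x') \<in> ({0::real} \<times> X) \<inter> U0" using z' by (auto simp: Oy_def)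
        have hs0: "\<forall>h\<in>set (map L0 hs). norm h \<le> 1" using hs by (auto intro: order_trans[OF nL0])
        have bnd: "norm (D j 0 ?x' (map L0 hs) - D j 0 ?x (map L0 hs)) \<le> e'"
          using U0b[rule_format, of "(0, ?x')" "map L0 hs"] x' hs0 hs by simp
        have jk: "j \<le> k" using j by simp
        have "D' j (fst z') (snd z') hs - D' j (fst z) (snd z) hs
              = Q ((1/w)^j *\<^sub>R (D j 0 ?x' (map L0 hs) - D j 0 ?x (map L0 hs)))"
          unfolding D'_def mapL using hom[OF jk _ , of ?x' "map L0 hs"] hom[OF jk x, of "map L0 hs"] x' hs
            linear_diff[OF Qlin]
          by (simp add: scaleR_diff_right)
        then have "norm (D' j (fst z') (snd z') hs - D' j (fst z) (snd z) hs)
              = cQ * (1/w)^j * norm (D j 0 ?x' (map L0 hs) - D j 0 ?x (map L0 hs))"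
          using w_pos by (simp add: normQ)
        also have "\<dots> \<le> cQ * (1/w)^j * e'"
          using bnd cQ w_pos by (intro mult_left_mono) auto
        finally show "norm (D' j (fst z') (snd z') hs - D' j (fst z) (snd z) hs) \<le> e" using ce by simp
      qed
    next
      fix j assume j: "j \<in> {1..k}"
      then obtain B where B: "\<forall>z\<in>{0::real} \<times> X. \<forall>hs. length hs = j \<and> set hs \<subseteq> UNIV \<and> (\<forall>h\<in>set hs. norm h \<le> 1) \<longrightarrow>
              norm (D j (fst z) (snd z) hs) \<le> B" using Dbd by blast
      have jk: "j \<le> k" using j by simp
      show "\<exists>B. \<forall>z\<in>UNIV \<times> Oy. \<forall>hs. length hs = j \<and> set hs \<subseteq> Cspace tau \<and> (\<forall>h\<in>set hs. norm h \<le> 1) \<longrightarrow>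
              norm (D' j (fst z) (snd z) hs) \<le> B"
      proof (intro exI[of _ "cQ * (1/w)^j * B"] ballI allI impI)
        fix z :: "real \<times> (real \<Rightarrow>\<^sub>C (real^'m))" and hs :: "(real \<Rightarrow>\<^sub>C (real^'m)) list" assume z: "z \<in> UNIV \<times> Oy" and hs: "length hs = j \<and> set hs \<subseteq> Cspace tau \<and> (\<forall>h\<in>set hs. norm h \<le> 1)"
        have x: "L (snd z) \<in> X" using z by (auto simp: Oy_def)
        have hs0: "\<forall>h\<in>set (map L0 hs). norm h \<le> 1" using hs by (auto intro: order_trans[OF nL0])
        have bnd: "norm (D j 0 (L (snd z)) (map L0 hs)) \<le> B" using B[rule_format, of "(0, L (snd z))" "map L0 hs"] x hs0 hs by simp
        have "norm (D' j (fst z) (snd z) hs) = cQ * (1/w)^j * norm (D j 0 (L (snd z)) (map L0 hs))"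
          unfolding D'_def mapL using hom[OF jk x, of "map L0 hs"] hs w_pos by (simp add: normQ)
        also have "\<dots> \<le> cQ * (1/w)^j * B" using bnd cQ w_pos by (intro mult_left_mono) auto
        finally show "norm (D' j (fst z) (snd z) hs) \<le> cQ * (1/w)^j * B" .
      qed
    qed
  qed
  have Oy0: "cnst (W *v x + b) \<in> Oy" if "x \<in> X" for x
    using that by (simp add: Oy_def cnstC Lcnst b_def PW)
  have regk: "if k = 0 then continuous_on X (ndde_map tau T UNIV Oy F W b Wt bt)
      else C0k_b k (Cspace tau) (UNIV \<times> Oy) F"
  proof (cases "k = 0")
    case True
    have "continuous_on X (ndde_map tau T UNIV Oy F W b Wt bt)"
      by (rule continuous_on_eq[OF Psic]) (simp add: nd)
    then show ?thesis using True by simp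
  next
    case False then show ?thesis using reg by simp
  qed
  have exs: "\<forall>x\<in>X. \<exists>y c. T < c \<and> is_sol tau UNIV Oy F 0 (cnst (W *v x + b)) c y"
    using ex by force
  have uniqs: "\<forall>x\<in>X. \<forall>y1 c1 y2 c2. is_sol tau UNIV Oy F 0 (cnst (W *v x + b)) c1 y1 \<and>
                          is_sol tau UNIV Oy F 0 (cnst (W *v x + b)) c2 y2 \<longrightarrow>
                          (\<forall>t\<in>{-tau..<min c1 c2}. y1 t = y2 t)"
  proof (intro ballI allI impI)
    fix x y1 c1 y2 c2 t
    assume x: "x \<in> X" and s: "is_sol tau UNIV Oy F 0 (cnst (W *v x + b)) c1 y1 \<and>
                          is_sol tau UNIV Oy F 0 (cnst (W *v x + b)) c2 y2" and t: "t \<in> {-tau..<min c1 c2}"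
    have "y1 t = ys x t" using uniq[OF x, of c1 y1] s t by auto
    moreover have "y2 t = ys x t" using uniq[OF x, of c2 y2] s t by auto
    ultimately show "y1 t = y2 t" by simp
  qed
  have NDDE: "is_NDDE k tau T X UNIV Oy F W b Wt bt"
    unfolding is_NDDE_def using openOy Oy0 exs uniqs regk by auto
  show ?thesis
    by (rule exI[of _ Oy], rule exI[of _ F], rule exI[of _ W], rule exI[of _ b], rule exI[of _ Wt], rule exI[of _ bt])
      (use NDDE card nd lip mW mWt in blast)
qed
end
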